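(* Suppose $k_n\sim n^a$ for some $0<a<1$, and that for some $0\le\delta<1-a$ there exist $\theta_{0n}=(\theta_{10n},\dots,\theta_{K(n)0n})$ with $\|f_{\theta_{0n}}-f_0\|_2=o(n^{-\delta})$ (A1) and $\sum_{i=1}^{K(n)}\theta_{i0n}^2=o(n^{1-\delta})$ (A2). With $\omega_n=(\theta_n,\sigma^2)$ and $\kappa>0$, let $$N_{\kappa/n^\delta}=\Big\{\omega_n:\tfrac12\log\tfrac{\sigma^2}{\sigma_0^2}-\tfrac12\Big(1-\tfrac{\sigma_0^2}{\sigma^2}\Big)+\tfrac1{2\sigma^2}\int(f_{\theta_n}(\mathbf x)-f_0(\mathbf x))^2d\mathbf x<\kappa/n^\delta\Big\}.$$ Then for every $\kappa>0$ and $\tilde\kappa>0$, with prior $p(\omega_n)=\frac{\lambda^\alpha}{\Gamma(\alpha)}(\sigma^{-2})^{\alpha+1}e^{-\lambda/\sigma^2}\prod_{i=1}^{K(n)}(2\pi\zeta^2)^{-1/2}e^{-\theta_{in}^2/(2\zeta^2)}$, we have $\int_{N_{\kappa/n^\delta}}p(\omega_n)d\omega_n\ge e^{-\tilde\kappa n^{1-\delta}}$ for all sufficiently large $n$.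
   Context: $f_0$ is square integrable on $[0,1]^p$ ($p$ fixed), $\sigma_0>0$, and $\|\cdot\|_2$ is the $L_2([0,1]^p)$ norm. $\psi(u)=1/(1+e^{-u})$, $f_{\theta_n}(\mathbf x)=\beta_0+\sum_{j=1}^{k_n}\beta_j\psi(\gamma_{j0}+\sum_{h=1}^p\gamma_{jh}x_h)$, $\theta_n=(\theta_{1n},\dots,\theta_{K(n)n})$ the vector of all network parameters, $K(n)$ its length. $\alpha,\lambda,\zeta>0$ are fixed. The expression defining $N_{\kappa/n^\delta}$ is the KL divergence between the Gaussian regression densities with $(f_0,\sigma_0^2)$ and $(f_{\theta_n},\sigma^2)$ for $\mathbf x\sim\mathrm{Uniform}[0,1]^p$. *)

theory Defs
  imports "HOL-Probability.Probability" "HOL-Library.Landau_Symbols"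
begin

definition psi :: "real \<Rightarrow> real" where
  "psi u = 1 / (1 + exp (- u))"

text \<open>Number of parameters of a single-hidden-layer network with input dimension p
  and k hidden nodes: beta_0, beta_1..beta_k, and gamma_{j0..jp} for j = 1..k.\<close>
definition nparams :: "nat \<Rightarrow> nat \<Rightarrow> nat" where
  "nparams p k = 1 + k + k * (p + 1)"

text \<open>Parameter layout in theta :: nat => real (indices 0 ..< nparams p k):
  beta_0 = theta 0, beta_j = theta j (1 <= j <= k),
  gamma_{jh} = theta (k + 1 + (j - 1) * (p + 1) + h)  (1 <= j <= k, 0 <= h <= p).
  Inputs x :: nat => real use coordinates x_1..x_p stored at x 0 .. x (p-1).\<close>
definition gamma_idx :: "nat \<Rightarrow> nat \<Rightarrow> nat \<Rightarrow> nat \<Rightarrow> nat" where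
  "gamma_idx p k j h = k + 1 + (j - 1) * (p + 1) + h"

definition fnet :: "nat \<Rightarrow> nat \<Rightarrow> (nat \<Rightarrow> real) \<Rightarrow> (nat \<Rightarrow> real) \<Rightarrow> real" where
  "fnet p k theta x =
     theta 0 + (\<Sum>j = 1..k. theta j *
        psi (theta (gamma_idx p k j 0) + (\<Sum>h = 1..p. theta (gamma_idx p k j h) * x (h - 1))))"

definition cube :: "nat \<Rightarrow> (nat \<Rightarrow> real) measure" where
  "cube p = PiM {..<p} (\<lambda>_. restrict_space lborel {0..1})"

definition L2norm :: "nat \<Rightarrow> ((nat \<Rightarrow> real) \<Rightarrow> real) \<Rightarrow> real" where
  "L2norm p g = sqrt (\<integral>x. (g x)\<^sup>2 \<partial>cube p)"

text \<open>Parameter space: omega = (theta, sigma^2) with Lebesgue measure on R^K \<times> R.\<close>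
definition param_space :: "nat \<Rightarrow> ((nat \<Rightarrow> real) \<times> real) measure" where
  "param_space K = PiM {..<K} (\<lambda>_. lborel) \<Otimes>\<^sub>M lborel"

definition prior_dens ::
  "real \<Rightarrow> real \<Rightarrow> real \<Rightarrow> nat \<Rightarrow> (nat \<Rightarrow> real) \<times> real \<Rightarrow> real" where
  "prior_dens \<alpha> lam \<zeta> K \<omega> =
     (let theta = fst \<omega>; s = snd \<omega> in
      if s > 0 then
        (lam powr \<alpha> / Gamma \<alpha>) * (1 / s) powr (\<alpha> + 1) * exp (- lam / s) *
        (\<Prod>i<K. (2 * pi * \<zeta>\<^sup>2) powr (- 1 / 2) * exp (- (theta i)\<^sup>2 / (2 * \<zeta>\<^sup>2)))
      else 0)"

text \<open>KL divergence between N(f0, sigma0^2) and N(f_theta, sigma^2) regression densities,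
  x uniform on [0,1]^p.\<close>
definition KL_div ::
  "nat \<Rightarrow> nat \<Rightarrow> ((nat \<Rightarrow> real) \<Rightarrow> real) \<Rightarrow> real \<Rightarrow> (nat \<Rightarrow> real) \<times> real \<Rightarrow> real" where
  "KL_div p k f0 \<sigma>0 \<omega> =
     (let theta = fst \<omega>; s = snd \<omega> in
      1/2 * ln (s / \<sigma>0\<^sup>2) - 1/2 * (1 - \<sigma>0\<^sup>2 / s)
      + 1 / (2 * s) * (\<integral>x. (fnet p k theta x - f0 x)\<^sup>2 \<partial>cube p))"

definition KL_nbhd ::
  "nat \<Rightarrow> nat \<Rightarrow> ((nat \<Rightarrow> real) \<Rightarrow> real) \<Rightarrow> real \<Rightarrow> real \<Rightarrow> ((nat \<Rightarrow> real) \<times> real) set" where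
  "KL_nbhd p k f0 \<sigma>0 \<epsilon> = {\<omega>. snd \<omega> > 0 \<and> KL_div p k f0 \<sigma>0 \<omega> < \<epsilon>}"

end

theory Submission
  imports Defs
begin
lemma box_measure:
  fixes c :: "nat \<Rightarrow> real" and e u v :: real
  assumes "0 \<le> e" "u \<le> v"
  shows "emeasure (param_space K) (PiE {..<K} (\<lambda>i. {c i - e..c i + e}) \<times> {u..v})
     = ennreal ((2*e)^K * (v-u))"
proof -
  interpret product_sigma_finite "\<lambda>_::nat. lborel" by standard
  have "emeasure (param_space K) (PiE {..<K} (\<lambda>i. {c i - e..c i + e}) \<times> {u..v})
     = emeasure (PiM {..<K} (\<lambda>_. lborel)) (PiE {..<K} (\<lambda>i. {c i - e..c i + e})) * emeasure lborel {u..v}"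
    unfolding param_space_def
    by (rule lborel.emeasure_pair_measure_Times) (auto intro!: sets_PiM_I_finite)
  also have "emeasure (PiM {..<K} (\<lambda>_. lborel)) (PiE {..<K} (\<lambda>i. {c i - e..c i + e})) = (\<Prod>i<K. ennreal (2*e))"
    by (subst emeasure_PiM) (auto simp: assms)
  also have "\<dots> = ennreal ((2*e)^K)" using assms by (simp add: ennreal_power)
  finally show ?thesis using assms by (simp add: ennreal_mult)
qed

lemma psi_pos: "0 < psi u" unfolding psi_def by (simp add: add_pos_pos)
lemma psi_le1: "psi u \<le> 1" unfolding psi_def by (simp add: add_pos_pos)

lemma psi_lip_aux: assumes "v \<le> u" shows "psi u - psi v \<le> u - v"
proof -
  have e1: "exp (-v) - exp (-u) \<le> exp (-v) * (u - v)"
  proof -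
    have "1 + (v - u) \<le> exp (v - u)" by (rule exp_ge_add_one_self)
    hence "1 - exp (-(u-v)) \<le> u - v" by (simp only: minus_diff_eq)
    hence "exp (-v) * (1 - exp (-(u-v))) \<le> exp (-v) * (u - v)" by (simp add: mult_left_mono)
    moreover have "exp (-v) * (1 - exp (-(u-v))) = exp (-v) - exp (-u)"
      by (simp add: algebra_simps flip: exp_add)
    ultimately show ?thesis by linarith
  qed
  have "psi u - psi v = (exp (-v) - exp (-u)) / ((1 + exp (-u)) * (1 + exp (-v)))"
  proof -
    have "1 + exp (-u) \<noteq> 0" "1 + exp (-v) \<noteq> 0" by (smt (verit) exp_gt_zero)+
    thus ?thesis unfolding psi_def by (simp add: diff_frac_eq)
  qed
  also have "\<dots> \<le> (exp (-v) * (u - v)) / ((1 + exp (-u)) * (1 + exp (-v)))"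
    using e1 by (intro divide_right_mono) (auto intro!: mult_nonneg_nonneg add_nonneg_nonneg)
  also have "\<dots> \<le> u - v"
  proof -
    have "exp (-v) \<le> (1 + exp (-u)) * (1 + exp (-v))"
      by (simp add: algebra_simps add_nonneg_nonneg)
    hence "exp (-v) * (u - v) \<le> ((1 + exp (-u)) * (1 + exp (-v))) * (u - v)"
      using assms by (intro mult_right_mono) auto
    thus ?thesis by (simp add: divide_le_eq add_pos_pos mult.commute)
  qed
  finally show ?thesis .
qed

lemma psi_mono: "v \<le> u \<Longrightarrow> psi v \<le> psi u"
  unfolding psi_def by (simp add: frac_le add_pos_pos)

lemma psi_lip: "\<bar>psi u - psi v\<bar> \<le> \<bar>u - v\<bar>"
proof (cases "v \<le> u")
  case True thus ?thesis using psi_lip_aux[OF True] psi_mono[OF True] by simp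
next
  case False hence "u \<le> v" by simp
  thus ?thesis using psi_lip_aux[of u v] psi_mono[of u v] by simp
qed

lemma gidx_lt: assumes "1 \<le> j" "j \<le> k" "h \<le> p" shows "gamma_idx p k j h < nparams p k"
proof -
  obtain j' where j: "j = Suc j'" using assms(1) by (cases j) auto
  have "j' * (p+1) + h < j' * (p+1) + (p + 1)" using assms(3) by simp
  also have "\<dots> = j * (p+1)" using j by simp
  also have "\<dots> \<le> k * (p+1)" using assms(2) by (intro mult_right_mono) auto
  finally show ?thesis unfolding gamma_idx_def nparams_def using j by simp
qed

lemma j_lt: assumes "j \<le> k" shows "j < nparams p k"
  using assms unfolding nparams_def by simp

lemma fnet_diff:
  fixes \<theta> \<theta>' :: "nat \<Rightarrow> real"
  assumes close: "\<And>i. i < nparams p k \<Longrightarrow> \<bar>\<theta> i - \<theta>' i\<bar> \<le> \<eta>"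
    and x01: "\<And>h. h < p \<Longrightarrow> 0 \<le> x h \<and> x h \<le> 1"
  shows "\<bar>fnet p k \<theta> x - fnet p k \<theta>' x\<bar> \<le> \<eta> * (1 + real k + real (p+1) * (\<Sum>j=1..k. \<bar>\<theta>' j\<bar>))"
proof -
  define u where "u th j = th (gamma_idx p k j 0) + (\<Sum>h = 1..p. th (gamma_idx p k j h) * x (h - 1))" for th j
  have \<eta>0: "0 \<le> \<eta>" using close[of 0] by (simp add: nparams_def)
  have ud: "\<bar>u \<theta> j - u \<theta>' j\<bar> \<le> real (p+1) * \<eta>" if j: "1 \<le> j" "j \<le> k" for j
  proof -
    have eq0: "u \<theta> j - u \<theta>' j = (\<theta> (gamma_idx p k j 0) - \<theta>' (gamma_idx p k j 0))
        + (\<Sum>h = 1..p. (\<theta> (gamma_idx p k j h) - \<theta>' (gamma_idx p k j h)) * x (h - 1))"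
      unfolding u_def by (simp add: algebra_simps sum_subtractf)
    have "\<bar>u \<theta> j - u \<theta>' j\<bar> \<le> \<bar>\<theta> (gamma_idx p k j 0) - \<theta>' (gamma_idx p k j 0)\<bar>
        + (\<Sum>h = 1..p. \<bar>(\<theta> (gamma_idx p k j h) - \<theta>' (gamma_idx p k j h)) * x (h - 1)\<bar>)"
      unfolding eq0 by (rule order_trans[OF abs_triangle_ineq], rule add_left_mono, rule sum_abs)
    also have "\<dots> \<le> \<eta> + (\<Sum>h = 1..p. \<eta>)"
    proof (intro add_mono sum_mono)
      show "\<bar>\<theta> (gamma_idx p k j 0) - \<theta>' (gamma_idx p k j 0)\<bar> \<le> \<eta>"
        using close[OF gidx_lt[OF j, of 0]] by simp
      fix h assume h: "h \<in> {1..p}"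
      have "\<bar>(\<theta> (gamma_idx p k j h) - \<theta>' (gamma_idx p k j h)) * x (h - 1)\<bar>
          = \<bar>\<theta> (gamma_idx p k j h) - \<theta>' (gamma_idx p k j h)\<bar> * \<bar>x (h - 1)\<bar>" by (simp add: abs_mult)
      also have "\<dots> \<le> \<eta> * 1"
      proof (rule mult_mono)
        show "\<bar>\<theta> (gamma_idx p k j h) - \<theta>' (gamma_idx p k j h)\<bar> \<le> \<eta>"
          using close[OF gidx_lt[OF j, of h]] h by simp
        have "h - 1 < p" using h by auto
        thus "\<bar>x (h - 1)\<bar> \<le> 1" using x01[of "h-1"] by simp
      qed (auto simp: \<eta>0)
      finally show "\<bar>(\<theta> (gamma_idx p k j h) - \<theta>' (gamma_idx p k j h)) * x (h - 1)\<bar> \<le> \<eta>" by simp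
    qed
    finally show ?thesis by (simp add: algebra_simps)
  qed
  have eq1: "fnet p k \<theta> x - fnet p k \<theta>' x = (\<theta> 0 - \<theta>' 0) +
      (\<Sum>j = 1..k. \<theta> j * psi (u \<theta> j) - \<theta>' j * psi (u \<theta>' j))"
    unfolding fnet_def u_def by (simp add: sum_subtractf)
  have "\<bar>fnet p k \<theta> x - fnet p k \<theta>' x\<bar> \<le> \<bar>\<theta> 0 - \<theta>' 0\<bar> + (\<Sum>j = 1..k. \<bar>\<theta> j * psi (u \<theta> j) - \<theta>' j * psi (u \<theta>' j)\<bar>)"
    unfolding eq1 by (rule order_trans[OF abs_triangle_ineq], rule add_left_mono, rule sum_abs)
  also have "\<dots> \<le> \<eta> + (\<Sum>j = 1..k. \<eta> + \<bar>\<theta>' j\<bar> * (real (p+1) * \<eta>))"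
  proof (intro add_mono sum_mono)
    show "\<bar>\<theta> 0 - \<theta>' 0\<bar> \<le> \<eta>" using close[of 0] by (simp add: nparams_def)
    fix j assume j: "j \<in> {1..k}"
    have eq2: "\<theta> j * psi (u \<theta> j) - \<theta>' j * psi (u \<theta>' j)
        = (\<theta> j - \<theta>' j) * psi (u \<theta> j) + \<theta>' j * (psi (u \<theta> j) - psi (u \<theta>' j))"
      by (simp add: algebra_simps)
    have "\<bar>\<theta> j * psi (u \<theta> j) - \<theta>' j * psi (u \<theta>' j)\<bar> \<le> \<bar>\<theta> j - \<theta>' j\<bar> * \<bar>psi (u \<theta> j)\<bar> + \<bar>\<theta>' j\<bar> * \<bar>psi (u \<theta> j) - psi (u \<theta>' j)\<bar>"
      unfolding eq2 by (rule order_trans[OF abs_triangle_ineq]) (simp add: abs_mult)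
    also have "\<dots> \<le> \<eta> * 1 + \<bar>\<theta>' j\<bar> * (real (p+1) * \<eta>)"
    proof (intro add_mono mult_mono mult_left_mono)
      show "\<bar>\<theta> j - \<theta>' j\<bar> \<le> \<eta>" using close[OF j_lt[of j k p]] j by simp
      show "\<bar>psi (u \<theta> j)\<bar> \<le> 1" using psi_pos[of "u \<theta> j"] psi_le1[of "u \<theta> j"] by simp
      show "\<bar>psi (u \<theta> j) - psi (u \<theta>' j)\<bar> \<le> real (p+1) * \<eta>"
        using psi_lip[of "u \<theta> j" "u \<theta>' j"] ud[of j] j by simp
    qed (auto simp: \<eta>0)
    finally show "\<bar>\<theta> j * psi (u \<theta> j) - \<theta>' j * psi (u \<theta>' j)\<bar> \<le> \<eta> + \<bar>\<theta>' j\<bar> * (real (p+1) * \<eta>)" by simp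
  qed
  also have "\<dots> = \<eta> * (1 + real k + real (p+1) * (\<Sum>j=1..k. \<bar>\<theta>' j\<bar>))"
  proof -
    have "(\<Sum>j=1..k. \<eta> + \<bar>\<theta>' j\<bar> * (real (p+1) * \<eta>)) = real k * \<eta> + (\<Sum>j=1..k. \<bar>\<theta>' j\<bar>) * (real (p+1) * \<eta>)"
      by (simp add: sum.distrib sum_distrib_right)
    thus ?thesis by (simp add: algebra_simps)
  qed
  finally show ?thesis .
qed

lemma psi_meas[measurable]: "psi \<in> borel_measurable borel"
proof -
  have "continuous_on UNIV psi" unfolding psi_def
    by (intro continuous_intros) (smt (verit) exp_gt_zero)
  thus ?thesis by (rule borel_measurable_continuous_onI)
qed

lemma comp_meas: "h < p \<Longrightarrow> (\<lambda>x. x h) \<in> borel_measurable (cube p)"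
proof -
  assume h: "h < p"
  have "(\<lambda>x. x h) \<in> measurable (PiM {..<p} (\<lambda>_. restrict_space lborel {0..1::real})) (restrict_space lborel {0..1})"
    by (rule measurable_component_singleton) (simp add: h)
  moreover have "(\<lambda>x::real. x) \<in> measurable (restrict_space lborel {0..1}) borel"
    by (rule measurable_restrict_space1) simp
  ultimately show ?thesis unfolding cube_def by (rule measurable_compose)
qed

lemma fnet_meas: "(\<lambda>x. fnet p k \<theta> x) \<in> borel_measurable (cube p)"
  unfolding fnet_def
proof (intro borel_measurable_add borel_measurable_const borel_measurable_sum borel_measurable_times
    measurable_compose[OF _ psi_meas])
  fix j h assume "h \<in> {1..p}"
  thus "(\<lambda>x. x (h - 1)) \<in> borel_measurable (cube p)" by (intro comp_meas) auto
qed

lemma prob_cube: "prob_space (cube p)"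
  unfolding cube_def
proof (intro prob_space_PiM prob_spaceI)
  show "emeasure (restrict_space lborel {0..1::real}) (space (restrict_space lborel {0..1})) = 1"
    by (simp add: emeasure_restrict_space)
qed

lemma space_cube: "x \<in> space (cube p) \<Longrightarrow> h < p \<Longrightarrow> 0 \<le> x h \<and> x h \<le> 1"
  unfolding cube_def by (auto simp: space_PiM PiE_iff)

lemma fnet_bounded: "\<bar>fnet p k \<theta> x\<bar> \<le> \<bar>\<theta> 0\<bar> + (\<Sum>j=1..k. \<bar>\<theta> j\<bar>)"
proof -
  have "\<bar>fnet p k \<theta> x\<bar> \<le> \<bar>\<theta> 0\<bar> + \<bar>\<Sum>j=1..k. \<theta> j *
        psi (\<theta> (gamma_idx p k j 0) + (\<Sum>h = 1..p. \<theta> (gamma_idx p k j h) * x (h - 1)))\<bar>"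
    unfolding fnet_def by (rule abs_triangle_ineq)
  also have "\<dots> \<le> \<bar>\<theta> 0\<bar> + (\<Sum>j=1..k. \<bar>\<theta> j *
        psi (\<theta> (gamma_idx p k j 0) + (\<Sum>h = 1..p. \<theta> (gamma_idx p k j h) * x (h - 1)))\<bar>)"
    by (rule add_left_mono, rule sum_abs)
  also have "\<dots> \<le> \<bar>\<theta> 0\<bar> + (\<Sum>j=1..k. \<bar>\<theta> j\<bar>)"
  proof (rule add_left_mono, rule sum_mono)
    fix j
    have "\<bar>\<theta> j * psi (\<theta> (gamma_idx p k j 0) + (\<Sum>h = 1..p. \<theta> (gamma_idx p k j h) * x (h - 1)))\<bar>
      = \<bar>\<theta> j\<bar> * \<bar>psi (\<theta> (gamma_idx p k j 0) + (\<Sum>h = 1..p. \<theta> (gamma_idx p k j h) * x (h - 1)))\<bar>"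
      by (rule abs_mult)
    also have "\<dots> \<le> \<bar>\<theta> j\<bar> * 1"
      by (rule mult_left_mono) (use psi_pos psi_le1 in \<open>auto simp: abs_le_iff less_imp_le\<close>)
    finally show "\<bar>\<theta> j * psi (\<theta> (gamma_idx p k j 0) + (\<Sum>h = 1..p. \<theta> (gamma_idx p k j h) * x (h - 1)))\<bar> \<le> \<bar>\<theta> j\<bar>" by simp
  qed
  finally show ?thesis .
qed

lemma integrable_sq:
  assumes f0m: "f0 \<in> borel_measurable (cube p)" and f0i: "integrable (cube p) (\<lambda>x. (f0 x)\<^sup>2)"
  shows "integrable (cube p) (\<lambda>x. (fnet p k \<theta> x - f0 x)\<^sup>2)"
proof -
  interpret prob_space "cube p" by (rule prob_cube)
  define B where "B = \<bar>\<theta> 0\<bar> + (\<Sum>j=1..k. \<bar>\<theta> j\<bar>)"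
  show ?thesis
  proof (rule Bochner_Integration.integrable_bound[where f="\<lambda>x. 2 * B\<^sup>2 + 2 * (f0 x)\<^sup>2"])
    show "integrable (cube p) (\<lambda>x. 2 * B\<^sup>2 + 2 * (f0 x)\<^sup>2)"
      using f0i by (intro Bochner_Integration.integrable_add Bochner_Integration.integrable_mult_right) auto
    show "(\<lambda>x. (fnet p k \<theta> x - f0 x)\<^sup>2) \<in> borel_measurable (cube p)"
      using fnet_meas f0m by measurable
    show "AE x in cube p. norm ((fnet p k \<theta> x - f0 x)\<^sup>2) \<le> norm (2 * B\<^sup>2 + 2 * (f0 x)\<^sup>2)"
    proof (rule AE_I2)
      fix x
      have b: "\<bar>fnet p k \<theta> x\<bar> \<le> B" unfolding B_def by (rule fnet_bounded)
      have "(fnet p k \<theta> x - f0 x)\<^sup>2 \<le> 2 * (fnet p k \<theta> x)\<^sup>2 + 2 * (f0 x)\<^sup>2"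
        by (smt (verit) sum_squares_ge_zero power2_diff power2_sum zero_le_power2 power2_eq_square)
      also have "(fnet p k \<theta> x)\<^sup>2 \<le> B\<^sup>2" using b by (metis abs_le_square_iff abs_of_nonneg abs_ge_zero order_trans)
      hence "2 * (fnet p k \<theta> x)\<^sup>2 + 2 * (f0 x)\<^sup>2 \<le> 2 * B\<^sup>2 + 2 * (f0 x)\<^sup>2" by simp
      finally show "norm ((fnet p k \<theta> x - f0 x)\<^sup>2) \<le> norm (2 * B\<^sup>2 + 2 * (f0 x)\<^sup>2)" by simp
    qed
  qed
qed

lemma integral_shift:
  assumes f0m: "f0 \<in> borel_measurable (cube p)" and f0i: "integrable (cube p) (\<lambda>x. (f0 x)\<^sup>2)"
    and close: "\<And>x. x \<in> space (cube p) \<Longrightarrow> \<bar>fnet p k \<theta> x - fnet p k \<theta>' x\<bar> \<le> B"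
  shows "(\<integral>x. (fnet p k \<theta> x - f0 x)\<^sup>2 \<partial>cube p) \<le> 2 * B\<^sup>2 + 2 * (\<integral>x. (fnet p k \<theta>' x - f0 x)\<^sup>2 \<partial>cube p)"
proof -
  interpret prob_space "cube p" by (rule prob_cube)
  have i': "integrable (cube p) (\<lambda>x. (fnet p k \<theta>' x - f0 x)\<^sup>2)" by (rule integrable_sq[OF f0m f0i])
  have "(\<integral>x. (fnet p k \<theta> x - f0 x)\<^sup>2 \<partial>cube p) \<le> (\<integral>x. 2 * B\<^sup>2 + 2 * (fnet p k \<theta>' x - f0 x)\<^sup>2 \<partial>cube p)"
  proof (rule integral_mono)
    show "integrable (cube p) (\<lambda>x. (fnet p k \<theta> x - f0 x)\<^sup>2)" by (rule integrable_sq[OF f0m f0i])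
    show "integrable (cube p) (\<lambda>x. 2 * B\<^sup>2 + 2 * (fnet p k \<theta>' x - f0 x)\<^sup>2)"
      using i' by (intro Bochner_Integration.integrable_add Bochner_Integration.integrable_mult_right) auto
    fix x assume x: "x \<in> space (cube p)"
    have c: "\<bar>fnet p k \<theta> x - fnet p k \<theta>' x\<bar> \<le> B" by (rule close[OF x])
    have "(fnet p k \<theta> x - f0 x)\<^sup>2 \<le> 2 * (fnet p k \<theta> x - fnet p k \<theta>' x)\<^sup>2 + 2 * (fnet p k \<theta>' x - f0 x)\<^sup>2"
      by (smt (verit) sum_squares_ge_zero power2_diff power2_sum zero_le_power2 power2_eq_square)
    also have "(fnet p k \<theta> x - fnet p k \<theta>' x)\<^sup>2 \<le> B\<^sup>2" using c by (metis abs_le_square_iff abs_of_nonneg abs_ge_zero order_trans)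
    hence "2 * (fnet p k \<theta> x - fnet p k \<theta>' x)\<^sup>2 + 2 * (fnet p k \<theta>' x - f0 x)\<^sup>2 \<le> 2 * B\<^sup>2 + 2 * (fnet p k \<theta>' x - f0 x)\<^sup>2" by simp
    finally show "(fnet p k \<theta> x - f0 x)\<^sup>2 \<le> 2 * B\<^sup>2 + 2 * (fnet p k \<theta>' x - f0 x)\<^sup>2" .
  qed
  also have "\<dots> = 2 * B\<^sup>2 + 2 * (\<integral>x. (fnet p k \<theta>' x - f0 x)\<^sup>2 \<partial>cube p)"
    using i' by (simp add: prob_space)
  finally show ?thesis .
qed

lemma ln_part:
  fixes r t :: real
  assumes "1 \<le> r" "r \<le> 1 + t" "t \<le> 1"
  shows "1/2 * ln r - 1/2 * (1 - 1 / r) \<le> t / 2"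
proof -
  have "ln r \<le> r - 1" using assms ln_le_minus_one[of r] by simp
  have r0: "r > 0" using assms by simp
  have "r - 2 + 1 / r = (r - 1)\<^sup>2 / r" using r0 by (simp add: field_simps power2_eq_square)
  also have "\<dots> \<le> (r - 1)\<^sup>2"
  proof -
    have a: "(r-1)\<^sup>2 * 1 \<le> (r-1)\<^sup>2 * r" by (rule mult_left_mono) (use assms in auto)
    show ?thesis using a r0 by (simp add: divide_le_eq)
  qed
  also have "\<dots> \<le> t" 
  proof -
    have "(r - 1)\<^sup>2 = (r - 1) * (r - 1)" by (simp add: power2_eq_square)
    also have "\<dots> \<le> 1 * t" using assms by (intro mult_mono) auto
    finally show ?thesis by simp
  qed
  finally have "r - 2 + 1 / r \<le> t" .
  moreover have "1/2 * ln r - 1/2 * (1 - 1 / r) = (ln r - 1 + 1 / r) / 2" by (simp add: field_simps)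
  moreover have "ln r - 1 + 1 / r \<le> t" using \<open>r - 2 + 1 / r \<le> t\<close> \<open>ln r \<le> r - 1\<close> by linarith
  ultimately show ?thesis by simp
qed

lemma box_in_nbhd:
  fixes \<theta> \<theta>' :: "nat \<Rightarrow> real"
  assumes f0m: "f0 \<in> borel_measurable (cube p)" and f0i: "integrable (cube p) (\<lambda>x. (f0 x)\<^sup>2)"
    and \<sigma>0: "\<sigma>0 > 0" and \<kappa>: "\<kappa> > 0" and N: "N > 0"
    and close: "\<And>i. i < nparams p k \<Longrightarrow> \<bar>\<theta> i - \<theta>' i\<bar> \<le> \<eta>"
    and s: "\<sigma>0\<^sup>2 \<le> s" "s \<le> \<sigma>0\<^sup>2 * (1 + t)" and t: "t \<le> 1" "t \<le> \<kappa> / (2 * N)"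
    and e: "(\<integral>x. (fnet p k \<theta>' x - f0 x)\<^sup>2 \<partial>cube p) \<le> \<sigma>0\<^sup>2 * \<kappa> / (4 * N)"
    and L: "(\<eta> * (1 + real k + real (p+1) * (\<Sum>j=1..k. \<bar>\<theta>' j\<bar>)))\<^sup>2 \<le> \<sigma>0\<^sup>2 * \<kappa> / (4 * N)"
  shows "(\<theta>, s) \<in> KL_nbhd p k f0 \<sigma>0 (\<kappa> / N)"
proof -
  define B where "B = \<eta> * (1 + real k + real (p+1) * (\<Sum>j=1..k. \<bar>\<theta>' j\<bar>))"
  define I where "I = (\<integral>x. (fnet p k \<theta> x - f0 x)\<^sup>2 \<partial>cube p)"
  define I' where "I' = (\<integral>x. (fnet p k \<theta>' x - f0 x)\<^sup>2 \<partial>cube p)"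
  have s0: "s > 0" using s \<sigma>0 by (smt (verit) zero_less_power2)
  have sq: "\<sigma>0\<^sup>2 > 0" using \<sigma>0 by simp
  have "I \<le> 2 * B\<^sup>2 + 2 * I'"
    unfolding I_def I'_def
  proof (rule integral_shift[OF f0m f0i])
    fix x assume "x \<in> space (cube p)"
    thus "\<bar>fnet p k \<theta> x - fnet p k \<theta>' x\<bar> \<le> B" unfolding B_def
      by (intro fnet_diff close) (auto dest: space_cube)
  qed
  have I0: "0 \<le> I" unfolding I_def by (rule Bochner_Integration.integral_nonneg) simp
  have "I / (2 * s) \<le> I / (2 * \<sigma>0\<^sup>2)" using I0 s sq s0 by (intro divide_left_mono) auto
  also have "\<dots> \<le> (2 * B\<^sup>2 + 2 * I') / (2 * \<sigma>0\<^sup>2)"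
    using \<open>I \<le> 2 * B\<^sup>2 + 2 * I'\<close> sq by (intro divide_right_mono) auto
  also have "\<dots> = (B\<^sup>2 + I') / \<sigma>0\<^sup>2" using sq by (simp add: field_simps)
  also have "\<dots> \<le> (\<sigma>0\<^sup>2 * \<kappa> / (4 * N) + \<sigma>0\<^sup>2 * \<kappa> / (4 * N)) / \<sigma>0\<^sup>2"
    using L e sq unfolding B_def I'_def by (intro divide_right_mono add_mono) auto
  also have "\<dots> = \<kappa> / (2 * N)" using sq by (simp add: field_simps)
  finally have third: "1 / (2 * s) * I \<le> \<kappa> / (2 * N)" by simp
  define r where "r = s / \<sigma>0\<^sup>2"
  have r: "1 \<le> r" "r \<le> 1 + t" unfolding r_def using s sq by (auto simp: field_simps)
  have "1/2 * ln r - 1/2 * (1 - 1 / r) \<le> t / 2" by (rule ln_part[OF r t(1)])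
  also have "\<dots> \<le> \<kappa> / (4 * N)" using t(2) by simp
  finally have first: "1/2 * ln (s / \<sigma>0\<^sup>2) - 1/2 * (1 - \<sigma>0\<^sup>2 / s) \<le> \<kappa> / (4 * N)"
    unfolding r_def by simp
  have "KL_div p k f0 \<sigma>0 (\<theta>, s) = 1/2 * ln (s / \<sigma>0\<^sup>2) - 1/2 * (1 - \<sigma>0\<^sup>2 / s) + 1 / (2 * s) * I"
    unfolding KL_div_def I_def by simp
  also have "\<dots> \<le> \<kappa> / (4 * N) + \<kappa> / (2 * N)" using first third by linarith
  also have "\<dots> < \<kappa> / N" using \<kappa> N by (simp add: field_simps)
  finally show ?thesis unfolding KL_nbhd_def using s0 by simp
qed

lemma prior_lb:
  fixes \<theta> c :: "nat \<Rightarrow> real"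
  assumes close: "\<And>i. i < K \<Longrightarrow> \<bar>\<theta> i - c i\<bar> \<le> \<eta>" and \<eta>: "0 \<le> \<eta>" "\<eta> \<le> 1"
    and s: "\<sigma>0\<^sup>2 \<le> s" "s \<le> 2 * \<sigma>0\<^sup>2" and \<sigma>0: "\<sigma>0 > 0"
    and \<alpha>: "\<alpha> > 0" and lam: "lam > 0" and \<zeta>: "\<zeta> > 0"
  shows "(lam powr \<alpha> / Gamma \<alpha> * (1 / (2 * \<sigma>0\<^sup>2)) powr (\<alpha> + 1) * exp (- lam / \<sigma>0\<^sup>2))
      * ((2 * pi * \<zeta>\<^sup>2) powr (- 1 / 2)) ^ K * exp (- ((\<Sum>i<K. (c i)\<^sup>2) + real K) / \<zeta>\<^sup>2)
    \<le> prior_dens \<alpha> lam \<zeta> K (\<theta>, s)"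
proof -
  have sq: "\<sigma>0\<^sup>2 > 0" using \<sigma>0 by simp
  have s0: "s > 0" using s sq by linarith
  have G: "Gamma \<alpha> > 0" using \<alpha> by (rule Gamma_real_pos)
  define g where "g = (2 * pi * \<zeta>\<^sup>2) powr (- 1 / 2)"
  have g0: "g > 0" unfolding g_def using \<zeta> by simp
  have A: "lam powr \<alpha> / Gamma \<alpha> * (1 / (2 * \<sigma>0\<^sup>2)) powr (\<alpha> + 1) * exp (- lam / \<sigma>0\<^sup>2)
      \<le> lam powr \<alpha> / Gamma \<alpha> * (1 / s) powr (\<alpha> + 1) * exp (- lam / s)"
  proof (intro mult_mono)
    show "(1 / (2 * \<sigma>0\<^sup>2)) powr (\<alpha> + 1) \<le> (1 / s) powr (\<alpha> + 1)"
    proof (rule powr_mono2)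
      have "0 < (2 * \<sigma>0\<^sup>2) * s" using s0 sq by simp
      thus "1 / (2 * \<sigma>0\<^sup>2) \<le> 1 / s" using s by (intro divide_left_mono) auto
    qed (use \<alpha> sq in auto)
    have "0 < s * \<sigma>0\<^sup>2" using s0 sq by simp
    hence "lam / s \<le> lam / \<sigma>0\<^sup>2" using s lam by (intro divide_left_mono) auto
    thus "exp (- lam / \<sigma>0\<^sup>2) \<le> exp (- lam / s)" by simp
  qed (use G lam in auto)
  have P: "(\<Prod>i<K. g * exp (- ((c i)\<^sup>2 + 1) / \<zeta>\<^sup>2)) \<le> (\<Prod>i<K. g * exp (- (\<theta> i)\<^sup>2 / (2 * \<zeta>\<^sup>2)))"
  proof (rule prod_mono)
    fix i assume "i \<in> {..<K}"
    hence ci: "\<bar>\<theta> i - c i\<bar> \<le> 1" using close \<eta> by force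
    have "\<bar>\<theta> i\<bar> \<le> \<bar>c i\<bar> + 1" using ci by linarith
    hence "\<bar>\<theta> i\<bar>\<^sup>2 \<le> (\<bar>c i\<bar> + 1)\<^sup>2" by (intro power_mono) auto
    hence "(\<theta> i)\<^sup>2 \<le> (\<bar>c i\<bar> + 1)\<^sup>2" by simp
    also have "\<dots> \<le> 2 * ((c i)\<^sup>2 + 1)"
    proof -
      have "0 \<le> (\<bar>c i\<bar> - 1)\<^sup>2" by simp
      moreover have "(\<bar>c i\<bar> - 1)\<^sup>2 = \<bar>c i\<bar>\<^sup>2 - 2 * \<bar>c i\<bar> + 1" by (simp add: power2_diff)
      moreover have "(\<bar>c i\<bar> + 1)\<^sup>2 = \<bar>c i\<bar>\<^sup>2 + 2 * \<bar>c i\<bar> + 1" by (simp add: power2_sum)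
      moreover have "\<bar>c i\<bar>\<^sup>2 = (c i)\<^sup>2" by simp
      ultimately show ?thesis by (smt (verit))
    qed
    finally have "(\<theta> i)\<^sup>2 / (2 * \<zeta>\<^sup>2) \<le> ((c i)\<^sup>2 + 1) / \<zeta>\<^sup>2" using \<zeta> by (simp add: field_simps)
    hence "- (((c i)\<^sup>2 + 1) / \<zeta>\<^sup>2) \<le> - ((\<theta> i)\<^sup>2 / (2 * \<zeta>\<^sup>2))" by linarith
    hence "exp (- ((c i)\<^sup>2 + 1) / \<zeta>\<^sup>2) \<le> exp (- (\<theta> i)\<^sup>2 / (2 * \<zeta>\<^sup>2))"
      by (simp only: minus_divide_left exp_le_cancel_iff)
    thus "0 \<le> g * exp (- ((c i)\<^sup>2 + 1) / \<zeta>\<^sup>2) \<and> g * exp (- ((c i)\<^sup>2 + 1) / \<zeta>\<^sup>2) \<le> g * exp (- (\<theta> i)\<^sup>2 / (2 * \<zeta>\<^sup>2))"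
      using g0 by (auto intro: mult_left_mono)
  qed
  have P': "(\<Prod>i<K. g * exp (- ((c i)\<^sup>2 + 1) / \<zeta>\<^sup>2)) = g ^ K * exp (- ((\<Sum>i<K. (c i)\<^sup>2) + real K) / \<zeta>\<^sup>2)"
  proof -
    have "(\<Prod>i<K. g * exp (- ((c i)\<^sup>2 + 1) / \<zeta>\<^sup>2)) = g ^ K * (\<Prod>i<K. exp (- ((c i)\<^sup>2 + 1) / \<zeta>\<^sup>2))"
      by (simp add: prod.distrib)
    also have "(\<Prod>i<K. exp (- ((c i)\<^sup>2 + 1) / \<zeta>\<^sup>2)) = exp (\<Sum>i<K. - ((c i)\<^sup>2 + 1) / \<zeta>\<^sup>2)"
      by (simp add: exp_sum)
    also have "(\<Sum>i<K. - ((c i)\<^sup>2 + 1) / \<zeta>\<^sup>2) = - ((\<Sum>i<K. (c i)\<^sup>2) + real K) / \<zeta>\<^sup>2"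
    proof -
      have "(\<Sum>i<K. - ((c i)\<^sup>2 + 1)) = - ((\<Sum>i<K. (c i)\<^sup>2) + real K)"
        by (simp add: sum_subtractf sum_negf)
      thus ?thesis by (simp add: sum_divide_distrib[symmetric])
    qed
    finally show ?thesis .
  qed
  have "prior_dens \<alpha> lam \<zeta> K (\<theta>, s) = (lam powr \<alpha> / Gamma \<alpha> * (1 / s) powr (\<alpha> + 1) * exp (- lam / s))
       * (\<Prod>i<K. g * exp (- (\<theta> i)\<^sup>2 / (2 * \<zeta>\<^sup>2)))"
    unfolding prior_dens_def g_def using s0 by simp
  moreover have "(lam powr \<alpha> / Gamma \<alpha> * (1 / (2 * \<sigma>0\<^sup>2)) powr (\<alpha> + 1) * exp (- lam / \<sigma>0\<^sup>2))
      * (g ^ K * exp (- ((\<Sum>i<K. (c i)\<^sup>2) + real K) / \<zeta>\<^sup>2))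
    \<le> (lam powr \<alpha> / Gamma \<alpha> * (1 / s) powr (\<alpha> + 1) * exp (- lam / s))
       * (\<Prod>i<K. g * exp (- (\<theta> i)\<^sup>2 / (2 * \<zeta>\<^sup>2)))"
  proof (rule mult_mono[OF A])
    show "g ^ K * exp (- ((\<Sum>i<K. (c i)\<^sup>2) + real K) / \<zeta>\<^sup>2) \<le> (\<Prod>i<K. g * exp (- (\<theta> i)\<^sup>2 / (2 * \<zeta>\<^sup>2)))"
      using P P' by simp
    show "0 \<le> lam powr \<alpha> / Gamma \<alpha> * (1 / s) powr (\<alpha> + 1) * exp (- lam / s)"
      using G by simp
    show "0 \<le> g ^ K * exp (- ((\<Sum>i<K. (c i)\<^sup>2) + real K) / \<zeta>\<^sup>2)" using g0 by simp
  qed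
  ultimately show ?thesis unfolding g_def by (simp add: mult.assoc)
qed

lemma main_bound:
  fixes \<theta>' :: "nat \<Rightarrow> real"
  assumes f0m: "f0 \<in> borel_measurable (cube p)" and f0i: "integrable (cube p) (\<lambda>x. (f0 x)\<^sup>2)"
    and \<sigma>0: "\<sigma>0 > 0" and \<kappa>: "\<kappa> > 0" and N: "N > 0"
    and \<alpha>: "\<alpha> > 0" and lam: "lam > 0" and \<zeta>: "\<zeta> > 0"
    and \<eta>: "0 \<le> \<eta>" "\<eta> \<le> 1" and t: "0 \<le> t" "t \<le> 1" "t \<le> \<kappa> / (2 * N)"
    and e: "(\<integral>x. (fnet p k \<theta>' x - f0 x)\<^sup>2 \<partial>cube p) \<le> \<sigma>0\<^sup>2 * \<kappa> / (4 * N)"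
    and L: "(\<eta> * (1 + real k + real (p+1) * (\<Sum>j=1..k. \<bar>\<theta>' j\<bar>)))\<^sup>2 \<le> \<sigma>0\<^sup>2 * \<kappa> / (4 * N)"
  shows "ennreal ((lam powr \<alpha> / Gamma \<alpha> * (1 / (2 * \<sigma>0\<^sup>2)) powr (\<alpha> + 1) * exp (- lam / \<sigma>0\<^sup>2))
      * ((2 * pi * \<zeta>\<^sup>2) powr (- 1 / 2)) ^ nparams p k
      * exp (- ((\<Sum>i<nparams p k. (\<theta>' i)\<^sup>2) + real (nparams p k)) / \<zeta>\<^sup>2)
      * ((2 * \<eta>) ^ nparams p k * (\<sigma>0\<^sup>2 * (1 + t) - \<sigma>0\<^sup>2)))
    \<le> (\<integral>\<^sup>+ \<omega>. indicator (KL_nbhd p k f0 \<sigma>0 (\<kappa> / N)) \<omega> * ennreal (prior_dens \<alpha> lam \<zeta> (nparams p k) \<omega>)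
         \<partial>param_space (nparams p k))"
proof -
  define K where "K = nparams p k"
  define lb where "lb = (lam powr \<alpha> / Gamma \<alpha> * (1 / (2 * \<sigma>0\<^sup>2)) powr (\<alpha> + 1) * exp (- lam / \<sigma>0\<^sup>2))
      * ((2 * pi * \<zeta>\<^sup>2) powr (- 1 / 2)) ^ K * exp (- ((\<Sum>i<K. (\<theta>' i)\<^sup>2) + real K) / \<zeta>\<^sup>2)"
  define Box where "Box = PiE {..<K} (\<lambda>i. {\<theta>' i - \<eta>..\<theta>' i + \<eta>}) \<times> {\<sigma>0\<^sup>2..\<sigma>0\<^sup>2 * (1 + t)}"
  have G: "Gamma \<alpha> > 0" using \<alpha> by (rule Gamma_real_pos)
  have lb0: "0 \<le> lb" unfolding lb_def using G by simp
  have sq: "\<sigma>0\<^sup>2 > 0" using \<sigma>0 by simp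
  have le: "\<sigma>0\<^sup>2 \<le> \<sigma>0\<^sup>2 * (1 + t)" using sq t by simp
  have Boxm: "Box \<in> sets (param_space K)"
    unfolding Box_def param_space_def by (intro pair_measureI sets_PiM_I_finite) auto
  have "ennreal (lb * ((2 * \<eta>) ^ K * (\<sigma>0\<^sup>2 * (1 + t) - \<sigma>0\<^sup>2))) = ennreal lb * emeasure (param_space K) Box"
  proof -
    have meq: "emeasure (param_space K) Box = ennreal ((2 * \<eta>) ^ K * (\<sigma>0\<^sup>2 * (1 + t) - \<sigma>0\<^sup>2))"
      unfolding Box_def by (rule box_measure[OF \<eta>(1) le])
    have nn: "0 \<le> (2 * \<eta>) ^ K * (\<sigma>0\<^sup>2 * (1 + t) - \<sigma>0\<^sup>2)" using \<eta> le by simp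
    show ?thesis unfolding meq by (rule ennreal_mult[OF lb0 nn])
  qed
  also have "\<dots> = (\<integral>\<^sup>+ \<omega>. ennreal lb * indicator Box \<omega> \<partial>param_space K)"
    using Boxm by (simp add: nn_integral_cmult_indicator)
  also have "\<dots> \<le> (\<integral>\<^sup>+ \<omega>. indicator (KL_nbhd p k f0 \<sigma>0 (\<kappa> / N)) \<omega> * ennreal (prior_dens \<alpha> lam \<zeta> K \<omega>) \<partial>param_space K)"
  proof (rule nn_integral_mono)
    fix \<omega> :: "(nat \<Rightarrow> real) \<times> real"
    show "ennreal lb * indicator Box \<omega> \<le> indicator (KL_nbhd p k f0 \<sigma>0 (\<kappa> / N)) \<omega> * ennreal (prior_dens \<alpha> lam \<zeta> K \<omega>)"
    proof (cases "\<omega> \<in> Box")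
      case False thus ?thesis by simp
    next
      case True
      obtain \<theta> s where \<omega>: "\<omega> = (\<theta>, s)" by (cases \<omega>)
      have cl: "\<bar>\<theta> i - \<theta>' i\<bar> \<le> \<eta>" if "i < K" for i
      proof -
        have "\<theta> i \<in> {\<theta>' i - \<eta>..\<theta>' i + \<eta>}" using True that unfolding \<omega> Box_def by (auto simp: PiE_iff)
        thus ?thesis by (simp add: abs_le_iff)
      qed
      have s: "\<sigma>0\<^sup>2 \<le> s" "s \<le> \<sigma>0\<^sup>2 * (1 + t)" using True unfolding \<omega> Box_def by auto
      have "\<omega> \<in> KL_nbhd p k f0 \<sigma>0 (\<kappa> / N)"
        unfolding \<omega> by (rule box_in_nbhd[OF f0m f0i \<sigma>0 \<kappa> N _ s t(2,3) e L]) (use cl K_def in auto)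
      moreover have "lb \<le> prior_dens \<alpha> lam \<zeta> K \<omega>"
        unfolding lb_def \<omega>
      proof (rule prior_lb[OF cl \<eta> s(1) _ \<sigma>0 \<alpha> lam \<zeta>])
        have "\<sigma>0\<^sup>2 * (1 + t) \<le> \<sigma>0\<^sup>2 * 2" using t sq by (intro mult_left_mono) auto
        thus "s \<le> 2 * \<sigma>0\<^sup>2" using s(2) by simp
      qed
      ultimately show ?thesis using True by (simp add: ennreal_leI)
    qed
  qed
  finally show ?thesis unfolding lb_def K_def by simp
qed

lemma my_powr_at_top:
  assumes "(p::real) > 0"
  shows   "filterlim (\<lambda>x. x powr p) at_top at_top"
proof (subst filterlim_cong[OF refl refl])
  show "LIM x at_top. exp (p * ln x) :> at_top"
    by (rule filterlim_compose[OF exp_at_top filterlim_tendsto_pos_mult_at_top[OF tendsto_const]])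
       (simp_all add: ln_at_top assms)
  show "eventually (\<lambda>x. x powr p = exp (p * ln x)) at_top"
    using eventually_gt_at_top[of 0] by eventually_elim (simp add: powr_def)
qed

lemma powr_seq_top: "p > 0 \<Longrightarrow> eventually (\<lambda>n. Z \<le> real n powr p) sequentially"
proof -
  assume "p > 0"
  have "filterlim (\<lambda>n. real n powr p) at_top sequentially"
    by (rule filterlim_compose[OF my_powr_at_top[OF \<open>p > 0\<close>] filterlim_real_sequentially])
  thus ?thesis by (simp add: filterlim_at_top)
qed

lemma ln_small:
  assumes b: "b > 0" and \<epsilon>: "\<epsilon> > 0"
  shows "eventually (\<lambda>n. ln (real n) \<le> \<epsilon> * real n powr b) sequentially"
proof -
  have h: "0 < b / 2" using b by simp
  show ?thesis
  using powr_seq_top[OF h, where Z="2 / (b * \<epsilon>)"] eventually_ge_at_top[of "1::nat"]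
proof eventually_elim
  case (elim n)
  have n1: "1 \<le> real n" using elim by simp
  have "ln (real n) \<le> real n powr (b/2) / (b/2)" by (rule ln_powr_bound[OF n1]) (use b in simp)
  also have "\<dots> = (2 / (b * \<epsilon>)) * \<epsilon> * real n powr (b/2)" using b \<epsilon> by (simp add: field_simps)
  also have "\<dots> \<le> real n powr (b/2) * \<epsilon> * real n powr (b/2)"
    using elim(1) \<epsilon> by (intro mult_right_mono) auto
  also have "\<dots> = \<epsilon> * real n powr b"
    using n1 by (simp add: powr_add[symmetric] mult.commute mult.left_commute)
  finally show ?case .
qed
qed

lemma abs_le_1_sq: "\<bar>x::real\<bar> \<le> 1 + x\<^sup>2"
proof (cases "\<bar>x\<bar> \<le> 1")
  case True have "0 \<le> x\<^sup>2" by simp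
  thus ?thesis using True by linarith
next
  case False
  hence "\<bar>x\<bar> * 1 \<le> \<bar>x\<bar> * \<bar>x\<bar>" by (intro mult_left_mono) auto
  thus ?thesis by (simp add: power2_eq_square abs_mult_self_eq)
qed

lemma mass_ineq:
  fixes K D na lnn S \<zeta> \<kappa>' m E A0 B0 \<delta> :: real
  assumes K: "0 \<le> K" "K \<le> D * na" and na: "1 \<le> na" and lnn: "1 \<le> lnn" and S: "S / \<zeta>\<^sup>2 \<le> \<kappa>' / 4 * m"
    and core: "na * lnn \<le> \<kappa>' / (2 * E) * m" and E: "E = A0 + \<delta> + D * (B0 + 2)"
    and pos: "0 \<le> A0" "0 \<le> \<delta>" "0 \<le> B0" "1 \<le> D" "0 \<le> m" "0 < \<kappa>'"
  shows "A0 + K * (B0 + 2 * lnn) + S / \<zeta>\<^sup>2 + \<delta> * lnn \<le> \<kappa>' * m"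
proof -
  have "0 < D * (B0 + 2)" using pos by simp
  hence E0: "E > 0" using E pos by linarith
  have nl: "1 \<le> na * lnn" using na lnn by (metis mult_mono' mult_1 order_trans zero_le_one)
  have "K * (B0 + 2 * lnn) \<le> (D * na) * (B0 * lnn + 2 * lnn)"
  proof (rule mult_mono)
    show "B0 + 2 * lnn \<le> B0 * lnn + 2 * lnn" using pos lnn
      by (simp add: mult_le_cancel_left1)
  qed (use K pos lnn in auto)
  also have "\<dots> = D * (B0 + 2) * (na * lnn)" by (simp add: algebra_simps)
  finally have t1: "K * (B0 + 2 * lnn) \<le> D * (B0 + 2) * (na * lnn)" .
  have t2: "A0 \<le> A0 * (na * lnn)" using pos nl by (metis mult_left_mono mult.right_neutral)
  have t3: "\<delta> * lnn \<le> \<delta> * (na * lnn)"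
    using pos na lnn by (intro mult_left_mono) (auto intro: order_trans[of _ "1 * lnn"] mult_right_mono)
  have "A0 + K * (B0 + 2 * lnn) + \<delta> * lnn \<le> E * (na * lnn)"
    using t1 t2 t3 E by (simp add: algebra_simps)
  also have "\<dots> \<le> E * (\<kappa>' / (2 * E) * m)" using core E0 by (intro mult_left_mono) auto
  also have "\<dots> = \<kappa>' / 2 * m" using E0 by (simp add: field_simps)
  finally have "A0 + K * (B0 + 2 * lnn) + \<delta> * lnn \<le> \<kappa>' / 2 * m" .
  moreover have "\<kappa>' / 2 * m + \<kappa>' / 4 * m = 3/4 * (\<kappa>' * m)" by (simp add: algebra_simps)
  moreover have "0 \<le> \<kappa>' * m" using pos by simp
  ultimately show ?thesis using S by linarith
qed

theorem proposition5:
  fixes p :: nat and f0 :: "(nat \<Rightarrow> real) \<Rightarrow> real"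
    and \<sigma>0 \<alpha> lam \<zeta> a \<delta> :: real
    and k :: "nat \<Rightarrow> nat"
    and \<theta>0 :: "nat \<Rightarrow> nat \<Rightarrow> real"
  assumes f0_meas: "f0 \<in> borel_measurable (cube p)"
    and f0_sq: "integrable (cube p) (\<lambda>x. (f0 x)\<^sup>2)"
    and \<sigma>0_pos: "\<sigma>0 > 0"
    and \<alpha>_pos: "\<alpha> > 0" and lam_pos: "lam > 0" and \<zeta>_pos: "\<zeta> > 0"
    and a_bounds: "0 < a" "a < 1"
    and k_asymp: "(\<lambda>n. real (k n)) \<sim>[at_top] (\<lambda>n. real n powr a)"
    and \<delta>_bounds: "0 \<le> \<delta>" "\<delta> < 1 - a"
    and A1: "(\<lambda>n. L2norm p (\<lambda>x. fnet p (k n) (\<theta>0 n) x - f0 x)) \<in> o(\<lambda>n. real n powr (- \<delta>))"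
    and A2: "(\<lambda>n. \<Sum>i<nparams p (k n). (\<theta>0 n i)\<^sup>2) \<in> o(\<lambda>n. real n powr (1 - \<delta>))"
  shows "\<forall>\<kappa> > 0. \<forall>\<kappa>' > 0. \<forall>\<^sub>F n in sequentially.
           ennreal (exp (- \<kappa>' * real n powr (1 - \<delta>)))
             \<le> (\<integral>\<^sup>+ \<omega>. indicator (KL_nbhd p (k n) f0 \<sigma>0 (\<kappa> / real n powr \<delta>)) \<omega>
                          * ennreal (prior_dens \<alpha> lam \<zeta> (nparams p (k n)) \<omega>)
                   \<partial>param_space (nparams p (k n)))"
proof (intro allI impI)
  fix \<kappa> \<kappa>' :: real assume \<kappa>: "\<kappa> > 0" and \<kappa>': "\<kappa>' > 0"
  define K where "K n = nparams p (k n)" for n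
  define S where "S n = (\<Sum>i<K n. (\<theta>0 n i)\<^sup>2)" for n
  define c0 where "c0 = min 1 (\<kappa>/2)"
  define C1 where "C1 = lam powr \<alpha> / Gamma \<alpha> * (1 / (2 * \<sigma>0\<^sup>2)) powr (\<alpha> + 1) * exp (- lam / \<sigma>0\<^sup>2)"
  define g where "g = (2 * pi * \<zeta>\<^sup>2) powr (- 1 / 2)"
  have G: "Gamma \<alpha> > 0" using \<alpha>_pos by (rule Gamma_real_pos)
  have C1pos: "C1 > 0" unfolding C1_def using G lam_pos \<sigma>0_pos by simp
  have gpos: "g > 0" unfolding g_def using \<zeta>_pos by simp
  have c0pos: "c0 > 0" "c0 \<le> 1" "c0 \<le> \<kappa>/2" unfolding c0_def using \<kappa> by auto
  have sq: "\<sigma>0\<^sup>2 > 0" using \<sigma>0_pos by simp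
  obtain ck where ck: "ck > 0" and ckev: "eventually (\<lambda>n. \<bar>real (k n)\<bar> \<le> ck * \<bar>real n powr a\<bar>) sequentially"
    using landau_o.bigE[OF asymp_equiv_imp_bigo[OF k_asymp]] by auto
  define c3 where "c3 = min 1 (\<kappa>' * \<zeta>\<^sup>2 / 4)"
  have c3: "c3 > 0" "c3 \<le> 1" "c3 \<le> \<kappa>' * \<zeta>\<^sup>2 / 4" unfolding c3_def using \<kappa>' \<zeta>_pos by auto
  have Sev: "eventually (\<lambda>n. \<bar>S n\<bar> \<le> c3 * \<bar>real n powr (1 - \<delta>)\<bar>) sequentially"
    using landau_o.smallD[OF A2 c3(1)] unfolding S_def K_def by simp
  define ce where "ce = sqrt (\<sigma>0\<^sup>2 * \<kappa> / 4)"
  have ce: "ce > 0" using sq \<kappa> unfolding ce_def by simp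
  have eev: "eventually (\<lambda>n. \<bar>L2norm p (\<lambda>x. fnet p (k n) (\<theta>0 n) x - f0 x)\<bar> \<le> ce * \<bar>real n powr (- \<delta>)\<bar>) sequentially"
    using landau_o.smallD[OF A1 ce] by simp
  define C where "C = 1 + ck + real (p+1) * (ck + 1)"
  define D where "D = 1 + real (p+2) * ck"
  define A0 where "A0 = \<bar>ln C1\<bar> + \<bar>ln (\<sigma>0\<^sup>2 * c0)\<bar>"
  define B0 where "B0 = \<bar>ln g\<bar> + 1 / \<zeta>\<^sup>2"
  define E where "E = A0 + \<delta> + D * (B0 + 2)"
  have D1: "1 \<le> D" unfolding D_def using ck by simp
  have A00: "0 \<le> A0" unfolding A0_def by simp
  have B00: "0 \<le> B0" unfolding B0_def by simp
  have Epos: "E > 0"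
  proof -
    have "0 < D * (B0 + 2)" using D1 B00 by simp
    thus ?thesis unfolding E_def using A00 \<delta>_bounds by linarith
  qed
  have b: "1 - \<delta> - a > 0" using \<delta>_bounds by simp
  have lnev: "eventually (\<lambda>n. ln (real n) \<le> \<kappa>' / (2 * E) * real n powr (1 - \<delta> - a)) sequentially"
    by (rule ln_small[OF b]) (use Epos \<kappa>' in simp)
  have bigev: "eventually (\<lambda>n. max (exp 1) (4 * C\<^sup>2 / (\<sigma>0\<^sup>2 * \<kappa>)) \<le> real n) sequentially"
    using filterlim_real_sequentially unfolding filterlim_at_top by blast
  show "eventually (\<lambda>n. ennreal (exp (- \<kappa>' * real n powr (1 - \<delta>)))
             \<le> (\<integral>\<^sup>+ \<omega>. indicator (KL_nbhd p (k n) f0 \<sigma>0 (\<kappa> / real n powr \<delta>)) \<omega>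
                          * ennreal (prior_dens \<alpha> lam \<zeta> (nparams p (k n)) \<omega>)
                   \<partial>param_space (nparams p (k n)))) sequentially"
    using ckev Sev eev lnev bigev
  proof eventually_elim
    case (elim n)
    have n_e: "exp 1 \<le> real n" and n_big: "4 * C\<^sup>2 / (\<sigma>0\<^sup>2 * \<kappa>) \<le> real n" using elim(5) by auto
    have n1: "1 \<le> real n" using n_e by (smt (verit) one_le_exp_iff)
    have npos: "0 < real n" using n1 by simp
    have lnn: "1 \<le> ln (real n)"
    proof -
      have "ln (exp 1) \<le> ln (real n)" using n_e npos by (subst ln_le_cancel_iff) auto
      thus ?thesis by simp
    qed
    define Nn where "Nn = real n powr \<delta>"
    have N1: "1 \<le> Nn" unfolding Nn_def using n1 \<delta>_bounds by (simp add: ge_one_powr_ge_zero)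
    have Nle: "Nn \<le> real n"
    proof -
      have "real n powr \<delta> \<le> real n powr 1" using \<delta>_bounds a_bounds n1 by (intro powr_mono) auto
      thus ?thesis unfolding Nn_def using npos by simp
    qed
    define mm where "mm = real n powr (1 - \<delta>)"
    have m1: "1 \<le> mm" unfolding mm_def using n1 \<delta>_bounds a_bounds by (simp add: ge_one_powr_ge_zero)
    have mle: "mm \<le> real n"
    proof -
      have "real n powr (1 - \<delta>) \<le> real n powr 1" using \<delta>_bounds a_bounds n1 by (intro powr_mono) auto
      thus ?thesis unfolding mm_def using npos by simp
    qed
    define na where "na = real n powr a"
    have na1: "1 \<le> na" unfolding na_def using n1 a_bounds by (simp add: ge_one_powr_ge_zero)
    have nale: "na \<le> real n"
    proof -
      have "real n powr a \<le> real n powr 1" using a_bounds n1 by (intro powr_mono) auto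
      thus ?thesis unfolding na_def using npos by simp
    qed
    have kb: "real (k n) \<le> ck * na" using elim(1) unfolding na_def by simp
    have S0: "0 \<le> S n" unfolding S_def by (simp add: sum_nonneg)
    have Sb: "S n \<le> c3 * mm" using elim(2) S0 unfolding mm_def by simp
    have Sle: "S n \<le> real n"
    proof -
      have "c3 * mm \<le> 1 * mm" using c3 m1 by (intro mult_right_mono) auto
      thus ?thesis using Sb mle by linarith
    qed
    define \<eta> where "\<eta> = 1 / (real n)\<^sup>2"
    have \<eta>: "0 \<le> \<eta>" "\<eta> \<le> 1" unfolding \<eta>_def using n1 by (auto simp: power_le_one_iff one_le_power)
    define t where "t = c0 / Nn"
    have t: "0 \<le> t" "t \<le> 1" "t \<le> \<kappa> / (2 * Nn)"
    proof -
      show "0 \<le> t" unfolding t_def using c0pos N1 by simp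
      have "c0 / Nn \<le> c0 / 1" using c0pos N1 by (intro divide_left_mono) auto
      thus "t \<le> 1" unfolding t_def using c0pos by simp
      have "c0 / Nn \<le> (\<kappa> / 2) / Nn" using c0pos N1 by (intro divide_right_mono) auto
      thus "t \<le> \<kappa> / (2 * Nn)" unfolding t_def by simp
    qed
    have N0: "0 < Nn" using N1 by simp
    define I' where "I' = (\<integral>x. (fnet p (k n) (\<theta>0 n) x - f0 x)\<^sup>2 \<partial>cube p)"
    have I'0: "0 \<le> I'" unfolding I'_def by (rule Bochner_Integration.integral_nonneg) simp
    have econd: "I' \<le> \<sigma>0\<^sup>2 * \<kappa> / (4 * Nn)"
    proof -
      have "real n powr (- \<delta>) = 1 / Nn" unfolding Nn_def by (simp add: powr_minus divide_inverse)
      hence "sqrt I' \<le> ce / Nn" using elim(3) N0 unfolding L2norm_def I'_def by simp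
      hence "(sqrt I')\<^sup>2 \<le> (ce / Nn)\<^sup>2" using I'0 by (intro power_mono) auto
      hence "I' \<le> ce\<^sup>2 / Nn\<^sup>2" using I'0 by (simp add: power_divide)
      also have "ce\<^sup>2 = \<sigma>0\<^sup>2 * \<kappa> / 4" unfolding ce_def using sq \<kappa> by simp
      also have "\<sigma>0\<^sup>2 * \<kappa> / 4 / Nn\<^sup>2 \<le> \<sigma>0\<^sup>2 * \<kappa> / 4 / Nn"
      proof (rule divide_left_mono)
        show "Nn \<le> Nn\<^sup>2" using N1 by (simp add: power2_eq_square)
      qed (use sq \<kappa> N0 in auto)
      finally show ?thesis by simp
    qed
    have sumabs: "(\<Sum>j=1..k n. \<bar>\<theta>0 n j\<bar>) \<le> real (k n) + S n"
    proof -
      have "(\<Sum>j=1..k n. \<bar>\<theta>0 n j\<bar>) \<le> (\<Sum>j=1..k n. 1 + (\<theta>0 n j)\<^sup>2)"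
        by (intro sum_mono abs_le_1_sq)
      also have "\<dots> = real (k n) + (\<Sum>j=1..k n. (\<theta>0 n j)\<^sup>2)" by (simp add: sum.distrib)
      also have "(\<Sum>j=1..k n. (\<theta>0 n j)\<^sup>2) \<le> S n"
        unfolding S_def K_def
      proof (rule sum_mono2)
        show "{1..k n} \<subseteq> {..<nparams p (k n)}" using j_lt by auto
      qed auto
      finally show ?thesis by simp
    qed
    define Ls where "Ls = 1 + real (k n) + real (p+1) * (\<Sum>j=1..k n. \<bar>\<theta>0 n j\<bar>)"
    have Ls0: "0 \<le> Ls" unfolding Ls_def by (simp add: sum_nonneg)
    have LsC: "Ls \<le> C * real n"
    proof -
      have k2: "real (k n) \<le> ck * real n" using kb nale ck by (smt (verit) mult_left_mono)
      have "real (p+1) * (\<Sum>j=1..k n. \<bar>\<theta>0 n j\<bar>) \<le> real (p+1) * (ck * real n + real n)"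
        using sumabs k2 Sle by (intro mult_left_mono) auto
      hence "Ls \<le> 1 + ck * real n + real (p+1) * (ck * real n + real n)" unfolding Ls_def using k2 by linarith
      also have "\<dots> \<le> real n + ck * real n + real (p+1) * (ck * real n + real n)" using n1 by simp
      also have "\<dots> = C * real n" unfolding C_def by (simp add: algebra_simps)
      finally show ?thesis .
    qed
    have Lcond: "(\<eta> * Ls)\<^sup>2 \<le> \<sigma>0\<^sup>2 * \<kappa> / (4 * Nn)"
    proof -
      have "\<eta> * Ls \<le> \<eta> * (C * real n)" using LsC \<eta> by (intro mult_left_mono) auto
      also have "\<dots> = C / real n" unfolding \<eta>_def using npos by (simp add: power2_eq_square field_simps)
      finally have "\<eta> * Ls \<le> C / real n" .
      hence "(\<eta> * Ls)\<^sup>2 \<le> (C / real n)\<^sup>2" using \<eta> Ls0 by (intro power_mono) auto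
      also have "\<dots> = C\<^sup>2 / real n / real n" by (simp add: power2_eq_square)
      also have "\<dots> \<le> (\<sigma>0\<^sup>2 * \<kappa> / 4) / real n"
      proof (rule divide_right_mono)
        have "4 * C\<^sup>2 \<le> (\<sigma>0\<^sup>2 * \<kappa>) * real n" using n_big sq \<kappa> by (simp add: divide_le_eq mult.commute)
        thus "C\<^sup>2 / real n \<le> \<sigma>0\<^sup>2 * \<kappa> / 4" using npos by (simp add: divide_le_eq field_simps)
      qed (use npos in simp)
      also have "\<dots> \<le> (\<sigma>0\<^sup>2 * \<kappa> / 4) / Nn" using Nle N0 sq \<kappa> by (intro divide_left_mono) auto
      finally show ?thesis by simp
    qed
    have MB: "ennreal (C1 * g ^ K n * exp (- (S n + real (K n)) / \<zeta>\<^sup>2)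
        * ((2 * \<eta>) ^ K n * (\<sigma>0\<^sup>2 * (1 + t) - \<sigma>0\<^sup>2)))
      \<le> (\<integral>\<^sup>+ \<omega>. indicator (KL_nbhd p (k n) f0 \<sigma>0 (\<kappa> / Nn)) \<omega>
                          * ennreal (prior_dens \<alpha> lam \<zeta> (nparams p (k n)) \<omega>)
                   \<partial>param_space (nparams p (k n)))"
      using main_bound[OF f0_meas f0_sq \<sigma>0_pos \<kappa> N0 \<alpha>_pos lam_pos \<zeta>_pos \<eta> t econd[unfolded I'_def]
          Lcond[unfolded Ls_def]]
      unfolding C1_def g_def S_def K_def by simp
    define R where "R = C1 * g ^ K n * exp (- (S n + real (K n)) / \<zeta>\<^sup>2)
        * ((2 * \<eta>) ^ K n * (\<sigma>0\<^sup>2 * (1 + t) - \<sigma>0\<^sup>2))"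
    have Rineq: "exp (- \<kappa>' * mm) \<le> R"
    proof -
      have Kr: "real (K n) = 1 + real (k n) * (real p + 2)" by (simp add: K_def nparams_def algebra_simps)
      have K0: "0 \<le> real (K n)" by simp
      have KD: "real (K n) \<le> D * na"
      proof -
        have "real (k n) * (real p + 2) \<le> (ck * na) * (real p + 2)" using kb by (intro mult_right_mono) auto
        hence "real (K n) \<le> 1 + ck * na * (real p + 2)" using Kr by linarith
        also have "\<dots> \<le> na + ck * na * (real p + 2)" using na1 by simp
        also have "\<dots> = D * na" unfolding D_def by (simp add: algebra_simps)
        finally show ?thesis .
      qed
      have m0: "0 \<le> mm" using m1 by simp
      have S\<zeta>: "S n / \<zeta>\<^sup>2 \<le> \<kappa>' / 4 * mm"
      proof -
        have "S n \<le> (\<kappa>' * \<zeta>\<^sup>2 / 4) * mm" using Sb c3 m0 by (meson mult_right_mono order_trans)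
        hence "S n / \<zeta>\<^sup>2 \<le> (\<kappa>' * \<zeta>\<^sup>2 / 4) * mm / \<zeta>\<^sup>2" using \<zeta>_pos by (intro divide_right_mono) auto
        also have "\<dots> = \<kappa>' / 4 * mm" using \<zeta>_pos by (simp add: field_simps)
        finally show ?thesis .
      qed
      have core: "na * ln (real n) \<le> \<kappa>' / (2 * E) * mm"
      proof -
        have "na * ln (real n) \<le> na * (\<kappa>' / (2 * E) * real n powr (1 - \<delta> - a))"
          using elim(4) na1 by (intro mult_left_mono) auto
        also have "\<dots> = \<kappa>' / (2 * E) * (real n powr a * real n powr (1 - \<delta> - a))" unfolding na_def by simp
        also have "real n powr a * real n powr (1 - \<delta> - a) = mm" unfolding mm_def by (simp add: powr_add[symmetric])
        finally show ?thesis .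
      qed
      have MI: "A0 + real (K n) * (B0 + 2 * ln (real n)) + S n / \<zeta>\<^sup>2 + \<delta> * ln (real n) \<le> \<kappa>' * mm"
        by (rule mass_ineq[OF K0 KD na1 lnn S\<zeta> core E_def A00 \<delta>_bounds(1) B00 D1 m0 \<kappa>'])
      define Lx where "Lx = ln C1 + real (K n) * ln g - (S n + real (K n)) / \<zeta>\<^sup>2
          + real (K n) * (ln 2 - 2 * ln (real n)) + ln (\<sigma>0\<^sup>2 * c0) - \<delta> * ln (real n)"
      have R_eq: "R = exp Lx"
      proof -
        have e2: "exp (real (K n) * ln g) = g ^ K n" using gpos by (simp add: exp_of_nat_mult)
        have e3: "exp (real (K n) * (ln 2 - 2 * ln (real n))) = (2 * \<eta>) ^ K n"
        proof -
          have "2 * ln (real n) = ln ((real n)\<^sup>2)" using npos by (simp add: ln_realpow)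
          hence "exp (ln 2 - 2 * ln (real n)) = 2 / (real n)\<^sup>2" using npos by (simp add: exp_diff)
          hence "exp (ln 2 - 2 * ln (real n)) = 2 * \<eta>" unfolding \<eta>_def by simp
          thus ?thesis by (simp add: exp_of_nat_mult)
        qed
        have e4: "\<sigma>0\<^sup>2 * (1 + t) - \<sigma>0\<^sup>2 = exp (ln (\<sigma>0\<^sup>2 * c0)) * exp (- (\<delta> * ln (real n)))"
        proof -
          have "Nn = exp (\<delta> * ln (real n))" unfolding Nn_def using npos by (simp add: powr_def)
          hence "exp (- (\<delta> * ln (real n))) = 1 / Nn" by (simp add: exp_minus divide_inverse)
          moreover have "exp (ln (\<sigma>0\<^sup>2 * c0)) = \<sigma>0\<^sup>2 * c0" using sq c0pos by simp
          ultimately show ?thesis unfolding t_def by (simp add: algebra_simps)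
        qed
        have "R = exp (ln C1) * exp (real (K n) * ln g) * exp (- (S n + real (K n)) / \<zeta>\<^sup>2)
            * (exp (real (K n) * (ln 2 - 2 * ln (real n))) * (exp (ln (\<sigma>0\<^sup>2 * c0)) * exp (- (\<delta> * ln (real n)))))"
          unfolding R_def e2 e3 e4[symmetric] using C1pos by simp
        also have "\<dots> = exp (ln C1 + real (K n) * ln g + (- (S n + real (K n)) / \<zeta>\<^sup>2)
            + (real (K n) * (ln 2 - 2 * ln (real n)) + (ln (\<sigma>0\<^sup>2 * c0) + - (\<delta> * ln (real n)))))"
          by (simp only: mult_exp_exp)
        also have "\<dots> = exp Lx"
        proof -
          have "(- (S n + real (K n))) / \<zeta>\<^sup>2 = - ((S n + real (K n)) / \<zeta>\<^sup>2)" by (rule minus_divide_left[symmetric])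
          hence "ln C1 + real (K n) * ln g + (- (S n + real (K n)) / \<zeta>\<^sup>2)
            + (real (K n) * (ln 2 - 2 * ln (real n)) + (ln (\<sigma>0\<^sup>2 * c0) + - (\<delta> * ln (real n)))) = Lx"
            unfolding Lx_def by linarith
          thus ?thesis by simp
        qed
        finally show ?thesis .
      qed
      have low: "- (A0 + real (K n) * (B0 + 2 * ln (real n)) + S n / \<zeta>\<^sup>2 + \<delta> * ln (real n)) \<le> Lx"
      proof -
        have l1: "- \<bar>ln C1\<bar> \<le> ln C1" "- \<bar>ln (\<sigma>0\<^sup>2 * c0)\<bar> \<le> ln (\<sigma>0\<^sup>2 * c0)" by auto
        have l2: "- (real (K n) * \<bar>ln g\<bar>) \<le> real (K n) * ln g"
        proof -
          have "real (K n) * (- \<bar>ln g\<bar>) \<le> real (K n) * ln g" using K0 by (intro mult_left_mono) auto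
          thus ?thesis by simp
        qed
        have l3: "- (real (K n) * (2 * ln (real n))) \<le> real (K n) * (ln 2 - 2 * ln (real n))"
        proof -
          have "real (K n) * (- (2 * ln (real n))) \<le> real (K n) * (ln 2 - 2 * ln (real n))"
            using K0 by (intro mult_left_mono) auto
          thus ?thesis by simp
        qed
        have l4: "(S n + real (K n)) / \<zeta>\<^sup>2 = S n / \<zeta>\<^sup>2 + real (K n) / \<zeta>\<^sup>2" by (simp add: add_divide_distrib)
        have l5: "real (K n) * (B0 + 2 * ln (real n)) = real (K n) * \<bar>ln g\<bar> + real (K n) / \<zeta>\<^sup>2 + real (K n) * (2 * ln (real n))"
          unfolding B0_def by (simp add: distrib_left)
        have l6: "Lx = ln C1 + real (K n) * ln g - (S n / \<zeta>\<^sup>2 + real (K n) / \<zeta>\<^sup>2)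
          + real (K n) * (ln 2 - 2 * ln (real n)) + ln (\<sigma>0\<^sup>2 * c0) - \<delta> * ln (real n)"
          unfolding Lx_def l4 by simp
        show ?thesis unfolding l6 A0_def l5 using l1 l2 l3 by linarith
      qed
      have "- \<kappa>' * mm \<le> Lx" using MI low by linarith
      thus ?thesis unfolding R_eq by simp
    qed
    show ?case using order_trans[OF ennreal_leI[OF Rineq] MB[folded R_def]] unfolding mm_def Nn_def by simp
  qed
qed

end
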